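(* For $n\ge0$ let $E_n(v,q)=\sum_{\pi\in\Pi_n}q^{\mathrm{cr}(\pi)+\mathrm{ne}(\pi)}v^{\mathrm{ed}(\pi)}$. Then $$\sum_{n\ge0}E_n(v,q)z^n=\cfrac{1}{1-z-\cfrac{vz^2}{1-(1+v)z-\cfrac{2qvz^2}{1-(2qv+1)z-\cfrac{3q^2vz^2}{1-(3q^2v+1)z-\cfrac{4q^3vz^2}{\cdots}}}}},$$ i.e. the Jacobi-type continued fraction whose $k$-th level ($k\ge0$) has denominator term $1-(1+kq^{k-1}v)z$ (the term being $1-z$ for $k=0$) and numerator $(k+1)q^kvz^2$.
   Context: $\Pi_n$ is the set of partitions of $[n]=\{1,\dots,n\}$ into disjoint nonempty blocks ($\Pi_0$ consists of the empty partition). Edges of $\pi$ are pairs $(i,j)$, $i<j$, of consecutive elements of the same block; $\mathrm{ed}(\pi)$ is the number of edges. Two edges $(i_1,j_1),(i_2,j_2)$ form a crossing if $i_1<i_2<j_1<j_2$ and a nesting if $i_1<i_2<j_2<j_1$; $\mathrm{cr}(\pi)$, $\mathrm{ne}(\pi)$ count the unordered pairs of edges forming a crossing, resp. a nesting. *)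

theory Defs
  imports "HOL-Computational_Algebra.Formal_Power_Series" "HOL-Library.Disjoint_Sets"
begin

definition set_partitions :: "nat \<Rightarrow> nat set set set" where
  "set_partitions n = {P. partition_on {1..n} P}"

definition edges :: "nat set set \<Rightarrow> (nat \<times> nat) set" where
  "edges P = {(i, j). \<exists>B\<in>P. i \<in> B \<and> j \<in> B \<and> i < j \<and> (\<forall>k\<in>B. \<not> (i < k \<and> k < j))}"

definition ed :: "nat set set \<Rightarrow> nat" where
  "ed P = card (edges P)"

text \<open>Crossings / nestings: unordered pairs of edges; each such pair is counted once
  via the ordering i1 < i2 of the left endpoints.\<close>
definition cr :: "nat set set \<Rightarrow> nat" where
  "cr P = card {((i1, j1), (i2, j2)). (i1, j1) \<in> edges P \<and> (i2, j2) \<in> edges P \<and>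
                 i1 < i2 \<and> i2 < j1 \<and> j1 < j2}"

definition ne :: "nat set set \<Rightarrow> nat" where
  "ne P = card {((i1, j1), (i2, j2)). (i1, j1) \<in> edges P \<and> (i2, j2) \<in> edges P \<and>
                 i1 < i2 \<and> i2 < j2 \<and> j2 < j1}"

definition E :: "nat \<Rightarrow> 'a::comm_ring_1 \<Rightarrow> 'a \<Rightarrow> 'a" where
  "E n v q = (\<Sum>P\<in>set_partitions n. q ^ (cr P + ne P) * v ^ (ed P))"

text \<open>Convergents of a J-fraction with level-k denominator term 1 - b k z and
  numerator c k z^2 (between levels k and k+1):
  jcf b c m k is the depth-m truncation of the tail starting at level k
  (the tail beyond depth m is replaced by 0).\<close>
fun jcf :: "(nat \<Rightarrow> 'a::field) \<Rightarrow> (nat \<Rightarrow> 'a) \<Rightarrow> nat \<Rightarrow> nat \<Rightarrow> 'a fps" where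
  "jcf b c 0 k = 0"
| "jcf b c (Suc m) k =
     inverse (1 - fps_const (b k) * fps_X - fps_const (c k) * fps_X ^ 2 * jcf b c m (Suc k))"

end

theory Submission
  imports Defs
begin

unbundle fps_syntax



fun Wm :: "(nat \<Rightarrow> 'a::field) \<Rightarrow> (nat \<Rightarrow> 'a) \<Rightarrow> nat \<Rightarrow> nat \<Rightarrow> nat \<Rightarrow> 'a" where
  "Wm b c m 0 k = (if k = 0 then 1 else 0)"
| "Wm b c m (Suc n) k = b k * Wm b c m n k + (if Suc k < m then Wm b c m n (Suc k) else 0)
     + (if k = 0 then 0 else c (k - 1) * Wm b c m n (k - 1))"

fun W :: "(nat \<Rightarrow> 'a::field) \<Rightarrow> (nat \<Rightarrow> 'a) \<Rightarrow> nat \<Rightarrow> nat \<Rightarrow> 'a" where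
  "W b c 0 k = (if k = 0 then 1 else 0)"
| "W b c (Suc n) k = b k * W b c n k + W b c n (Suc k)
     + (if k = 0 then 0 else c (k - 1) * W b c n (k - 1))"

lemma W_Wm: "k + n < m \<Longrightarrow> W b c n k = Wm b c m n k"
  by (induction n arbitrary: k) auto

fun H :: "(nat \<Rightarrow> 'a::field) \<Rightarrow> (nat \<Rightarrow> 'a) \<Rightarrow> nat \<Rightarrow> nat \<Rightarrow> 'a fps" where
  "H b c m 0 = jcf b c m 0"
| "H b c m (Suc k) = jcf b c (m - Suc k) (Suc k) * (fps_X * fps_const (c k) * H b c m k)"

lemma jcf_eq:
  "jcf b c (Suc m) k = 1 + fps_X * (fps_const (b k) * jcf b c (Suc m) k)
      + fps_X * (fps_const (c k) * fps_X * jcf b c m (Suc k) * jcf b c (Suc m) k)"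
proof -
  define D where "D = 1 - fps_const (b k) * fps_X - fps_const (c k) * fps_X ^ 2 * jcf b c m (Suc k)"
  have D0: "D $ 0 \<noteq> 0" by (simp add: D_def power2_eq_square)
  have J: "jcf b c (Suc m) k = inverse D" by (simp add: D_def)
  have "inverse D * D = 1" using D0 by (rule inverse_mult_eq_1)
  then show ?thesis unfolding J D_def by (simp add: algebra_simps power2_eq_square)
qed

lemma H_eq:
  assumes "k < m"
  shows "H b c m k = (if k = 0 then 1 else fps_X * (fps_const (c (k - 1)) * H b c m (k - 1)))
     + fps_X * (fps_const (b k) * H b c m k) + fps_X * H b c m (Suc k)"
proof -
  define D where "D = (if k = 0 then 1 else fps_X * (fps_const (c (k - 1)) * H b c m (k - 1)))"
  obtain m' where m': "m - k = Suc m'" using assms by (metis Suc_diff_Suc)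
  have m'': "m - Suc k = m'" using m' by simp
  have Hk: "H b c m k = jcf b c (m - k) k * D"
    by (cases k) (simp_all add: D_def algebra_simps)
  have HSk: "H b c m (Suc k) = jcf b c m' (Suc k) * (fps_X * fps_const (c k) * (jcf b c (m - k) k * D))"
    using Hk m'' by simp
  show ?thesis
    unfolding HSk D_def[symmetric] unfolding Hk m'
    apply (subst jcf_eq)
    by (simp add: algebra_simps)
qed

lemma H_nth: "k < m \<Longrightarrow> H b c m k $ n = Wm b c m n k"
proof (induction n arbitrary: k)
  case 0
  then show ?case by (subst H_eq) auto
next
  case (Suc n)
  have e: "H b c m k $ Suc n = (if k = 0 then 0 else c (k - 1) * H b c m (k - 1) $ n)
     + b k * H b c m k $ n + H b c m (Suc k) $ n"
    by (subst H_eq[OF Suc.prems]) (simp add: fps_X_mult_nth)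
  have z: "H b c m (Suc k) = 0" if "\<not> Suc k < m"
  proof -
    have "m - Suc k = 0" using that by simp
    then show ?thesis by simp
  qed
  show ?case unfolding e using Suc.IH[of "Suc k"] Suc.IH[of k] Suc.IH[of "k-1"] Suc.prems z
    by (auto simp del: H.simps)
qed

lemma jcf_tendsto:
  "(\<lambda>m. jcf b c m 0) \<longlonglongrightarrow> Abs_fps (\<lambda>n. W b c n 0)"
proof (rule tendsto_fpsI)
  fix n
  show "eventually (\<lambda>m. jcf b c m 0 $ n = Abs_fps (\<lambda>n. W b c n 0) $ n) sequentially"
    unfolding eventually_sequentially
  proof (intro exI allI impI)
    fix m assume "Suc n \<le> m"
    then have "0 < m" "0 + n < m" by auto
    then show "jcf b c m 0 $ n = Abs_fps (\<lambda>n. W b c n 0) $ n"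
      using H_nth[of 0 m b c n] W_Wm[of 0 n m b c] by simp
  qed
qed



definition cn :: "(nat \<times> nat) set \<Rightarrow> nat" where
  "cn A = card {(e, e'). e \<in> A \<and> e' \<in> A \<and> snd e < snd e' \<and> fst e' < snd e \<and> fst e \<noteq> fst e'}"

definition cfg :: "nat set \<Rightarrow> nat \<Rightarrow> nat \<Rightarrow> (nat \<times> nat) set set" where
  "cfg S t n = {A. A \<subseteq> {(a, b). a < b \<and> (a \<in> S \<or> t < a) \<and> t < b \<and> b \<le> t + n}
      \<and> (\<forall>a\<in>S. \<exists>b. (a, b) \<in> A) \<and> inj_on fst A \<and> inj_on snd A}"

definition wt :: "'a::comm_ring_1 \<Rightarrow> 'a \<Rightarrow> (nat \<times> nat) set \<Rightarrow> 'a" where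
  "wt v q A = q ^ cn A * v ^ card A"

definition G :: "'a::comm_ring_1 \<Rightarrow> 'a \<Rightarrow> nat set \<Rightarrow> nat \<Rightarrow> nat \<Rightarrow> 'a" where
  "G v q S t n = (\<Sum>A\<in>cfg S t n. wt v q A)"

lemma cfg_sub: "cfg S t n \<subseteq> Pow ({..t+n} \<times> {..t+n})"
  unfolding cfg_def by auto

lemma finite_cfg: "finite (cfg S t n)"
  by (rule finite_subset[OF cfg_sub]) auto

lemma finite_cfg_elem: "A \<in> cfg S t n \<Longrightarrow> finite A"
  using cfg_sub[of S t n] by (meson PowD finite_SigmaI finite_atMost finite_subset subsetD)

lemma cn_insert:
  assumes "finite A" "\<forall>e\<in>A. t' < snd e \<and> fst e \<noteq> s"
  shows "cn (insert (s, t') A) = cn A + card {e\<in>A. fst e < t'}"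
proof -
  let ?P = "\<lambda>A. {(e, e'). e \<in> A \<and> e' \<in> A \<and> snd e < snd e' \<and> fst e' < snd e \<and> fst e \<noteq> fst e'}"
  have eq: "?P (insert (s, t') A) = ?P A \<union> Pair (s, t') ` {e\<in>A. fst e < t'}"
    using assms(2) by fastforce
  have fin: "finite (?P A)"
    by (rule finite_subset[of _ "A \<times> A"]) (use assms(1) in auto)
  have disj: "?P A \<inter> Pair (s, t') ` {e\<in>A. fst e < t'} = {}"
    using assms(2) by fastforce
  have "card (Pair (s, t') ` {e\<in>A. fst e < t'}) = card {e\<in>A. fst e < t'}"
    by (rule card_image) (auto simp: inj_on_def)
  then show ?thesis
    unfolding cn_def eq using card_Un_disjoint[OF fin _ disj] assms(1) by auto
qed

lemma lefts_card:
  assumes "A \<in> cfg S' t' n"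
  shows "card {e\<in>A. fst e < t'} = card {a\<in>S'. a < t'}"
proof -
  have inj: "inj_on fst {e\<in>A. fst e < t'}"
    using assms unfolding cfg_def by (auto intro: inj_on_subset)
  have "fst ` {e\<in>A. fst e < t'} = {a\<in>S'. a < t'}"
  proof
    show "fst ` {e\<in>A. fst e < t'} \<subseteq> {a\<in>S'. a < t'}"
      using assms unfolding cfg_def by auto
    show "{a\<in>S'. a < t'} \<subseteq> fst ` {e\<in>A. fst e < t'}"
    proof
      fix a assume "a \<in> {a\<in>S'. a < t'}"
      then obtain b where "(a, b) \<in> A" "a < t'" using assms unfolding cfg_def by auto
      then show "a \<in> fst ` {e\<in>A. fst e < t'}" by force
    qed
  qed
  then show ?thesis using card_image[OF inj] by simp
qed



lemma cfg_split:
  assumes S: "S \<subseteq> {..t}"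
  shows "cfg S t (Suc n) = (cfg S (Suc t) n \<union> cfg (insert (Suc t) S) (Suc t) n) \<union>
     (\<Union>s\<in>S. insert (s, Suc t) ` (cfg (S - {s}) (Suc t) n \<union> cfg (insert (Suc t) (S - {s})) (Suc t) n))"
    (is "?L = ?R")
proof
  show "?L \<subseteq> ?R"
  proof
    fix A assume A: "A \<in> ?L"
    have sub: "A \<subseteq> {(a, b). a < b \<and> (a \<in> S \<or> t < a) \<and> t < b \<and> b \<le> t + Suc n}"
      and cov: "\<forall>a\<in>S. \<exists>b. (a, b) \<in> A" and injf: "inj_on fst A" and injs: "inj_on snd A"
      using A unfolding cfg_def by auto
    show "A \<in> ?R"
    proof (cases "\<exists>s. (s, Suc t) \<in> A")
      case True
      then obtain s where s: "(s, Suc t) \<in> A" by auto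
      have sS: "s \<in> S" using sub s by auto
      define A' where "A' = A - {(s, Suc t)}"
      have Aeq: "A = insert (s, Suc t) A'" using s A'_def by auto
      have right: "\<forall>e\<in>A'. Suc t < snd e"
      proof
        fix e assume e: "e \<in> A'"
        have "snd e \<noteq> Suc t"
          using injs e s unfolding A'_def inj_on_def by (metis DiffE insertI1 snd_conv)
        moreover have "t < snd e" using e sub unfolding A'_def by auto
        ultimately show "Suc t < snd e" by simp
      qed
      have left: "\<forall>e\<in>A'. fst e \<noteq> s"
        using injf s unfolding A'_def inj_on_def by (metis DiffE fst_conv singletonI)
      have sub': "A' \<subseteq> {(a, b). a < b \<and> (a \<in> S - {s} \<or> a = Suc t \<or> Suc t < a) \<and> Suc t < b \<and> b \<le> Suc t + n}"
      proof
        fix e assume e: "e \<in> A'"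
        obtain a b where ab: "e = (a, b)" by fastforce
        have "(a, b) \<in> A" using e ab A'_def by auto
        then have "a < b" "a \<in> S \<or> t < a" "b \<le> t + Suc n" using sub by auto
        moreover have "a \<noteq> s" "Suc t < b" using left right e ab by auto
        ultimately show "e \<in> {(a, b). a < b \<and> (a \<in> S - {s} \<or> a = Suc t \<or> Suc t < a) \<and> Suc t < b \<and> b \<le> Suc t + n}"
          using ab by auto
      qed
      have cov': "\<forall>a\<in>S - {s}. \<exists>b. (a, b) \<in> A'"
        using cov unfolding A'_def by auto
      have inj': "inj_on fst A'" "inj_on snd A'"
        using injf injs unfolding A'_def by (auto intro: inj_on_subset)
      have "A' \<in> cfg (S - {s}) (Suc t) n \<union> cfg (insert (Suc t) (S - {s})) (Suc t) n"
      proof (cases "\<exists>b. (Suc t, b) \<in> A'")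
        case True
        then have "A' \<in> cfg (insert (Suc t) (S - {s})) (Suc t) n"
          using sub' cov' inj' unfolding cfg_def by auto
        then show ?thesis by blast
      next
        case False
        have "A' \<subseteq> {(a, b). a < b \<and> (a \<in> S - {s} \<or> Suc t < a) \<and> Suc t < b \<and> b \<le> Suc t + n}"
          using sub' False by auto
        then have "A' \<in> cfg (S - {s}) (Suc t) n"
          using cov' inj' unfolding cfg_def by auto
        then show ?thesis by blast
      qed
      then show ?thesis using Aeq sS by blast
    next
      case False
      have sub': "A \<subseteq> {(a, b). a < b \<and> (a \<in> S \<or> a = Suc t \<or> Suc t < a) \<and> Suc t < b \<and> b \<le> Suc t + n}"
      proof
        fix e assume e: "e \<in> A"
        obtain a b where ab: "e = (a, b)" by fastforce
        have "a < b" "a \<in> S \<or> t < a" "b \<le> t + Suc n" "t < b" using sub e ab by auto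
        moreover have "b \<noteq> Suc t" using False e ab by auto
        ultimately show "e \<in> {(a, b). a < b \<and> (a \<in> S \<or> a = Suc t \<or> Suc t < a) \<and> Suc t < b \<and> b \<le> Suc t + n}"
          using ab by auto
      qed
      show ?thesis
      proof (cases "\<exists>b. (Suc t, b) \<in> A")
        case True
        then have "A \<in> cfg (insert (Suc t) S) (Suc t) n"
          using sub' cov injf injs unfolding cfg_def by auto
        then show ?thesis by blast
      next
        case False
        have "A \<subseteq> {(a, b). a < b \<and> (a \<in> S \<or> Suc t < a) \<and> Suc t < b \<and> b \<le> Suc t + n}"
          using sub' False by auto
        then have "A \<in> cfg S (Suc t) n"
          using cov injf injs unfolding cfg_def by auto
        then show ?thesis by blast
      qed
    qed
  qed
next
  show "?R \<subseteq> ?L"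
  proof
    fix A assume A: "A \<in> ?R"
    show "A \<in> ?L"
    proof (cases "A \<in> cfg S (Suc t) n \<union> cfg (insert (Suc t) S) (Suc t) n")
      case True
      then show ?thesis unfolding cfg_def by auto
    next
      case False
      then obtain s A' where sS: "s \<in> S" and Aeq: "A = insert (s, Suc t) A'"
        and A': "A' \<in> cfg (S - {s}) (Suc t) n \<union> cfg (insert (Suc t) (S - {s})) (Suc t) n"
        using A by blast
      have st: "s < Suc t" using sS S by auto
      have sub: "A' \<subseteq> {(a, b). a < b \<and> (a \<in> S - {s} \<or> a = Suc t \<or> Suc t < a) \<and> Suc t < b \<and> b \<le> Suc t + n}"
        and cov: "\<forall>a\<in>S - {s}. \<exists>b. (a, b) \<in> A'" and injf: "inj_on fst A'" and injs: "inj_on snd A'"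
        using A' unfolding cfg_def by auto
      have nf: "s \<notin> fst ` A'" using sub st by auto
      have ns: "Suc t \<notin> snd ` A'" using sub by auto
      have "A \<subseteq> {(a, b). a < b \<and> (a \<in> S \<or> t < a) \<and> t < b \<and> b \<le> t + Suc n}"
        using sub st sS unfolding Aeq by auto
      moreover have "\<forall>a\<in>S. \<exists>b. (a, b) \<in> A" using cov unfolding Aeq by auto
      moreover have "inj_on fst A" "inj_on snd A"
        using injf injs nf ns unfolding Aeq by auto
      ultimately show ?thesis unfolding cfg_def by auto
    qed
  qed
qed



lemma cfg_arcs:
  assumes "A \<in> cfg X t n" "X \<subseteq> Y"
  shows "A \<subseteq> {(a, b). a < b \<and> (a \<in> Y \<or> t < a) \<and> t < b \<and> b \<le> t + n}"
proof
  fix e assume "e \<in> A"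
  then have "e \<in> {(a, b). a < b \<and> (a \<in> X \<or> t < a) \<and> t < b \<and> b \<le> t + n}"
    using assms(1) unfolding cfg_def by blast
  then show "e \<in> {(a, b). a < b \<and> (a \<in> Y \<or> t < a) \<and> t < b \<and> b \<le> t + n}"
    using assms(2) by auto
qed

lemma cfg_disj:
  assumes "x \<notin> S" "\<not> t < x"
  shows "cfg S t n \<inter> cfg (insert x S) t n = {}"
proof (rule ccontr)
  assume "cfg S t n \<inter> cfg (insert x S) t n \<noteq> {}"
  then obtain A where A1: "A \<in> cfg S t n" and A2: "A \<in> cfg (insert x S) t n" by blast
  obtain b where "(x, b) \<in> A" using A2 unfolding cfg_def by auto
  moreover have "A \<subseteq> {(a, b). a \<in> S \<or> t < a}" using A1 unfolding cfg_def by auto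
  ultimately show False using assms by auto
qed

lemma G_rec:
  assumes S: "S \<subseteq> {..t}"
  shows "G v q S t (Suc n) = G v q S (Suc t) n + G v q (insert (Suc t) S) (Suc t) n +
    (\<Sum>s\<in>S. v * q ^ (card S - 1) * (G v q (S - {s}) (Suc t) n + G v q (insert (Suc t) (S - {s})) (Suc t) n))"
proof -
  define Y where "Y s = cfg (S - {s}) (Suc t) n \<union> cfg (insert (Suc t) (S - {s})) (Suc t) n" for s
  let ?w = "wt v q"
  have finS: "finite S" using S by (meson finite_atMost finite_subset)
  have tS: "Suc t \<notin> S" using S by auto
  have Y_prop: "\<forall>e\<in>A'. Suc t < snd e \<and> fst e \<noteq> s" if "s \<in> S" "A' \<in> Y s" for s A'
  proof
    fix e assume e: "e \<in> A'"
    obtain a b where ab: "e = (a, b)" by fastforce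
    have sub: "A' \<subseteq> {(a, b). a < b \<and> (a \<in> insert (Suc t) (S - {s}) \<or> Suc t < a) \<and> Suc t < b \<and> b \<le> Suc t + n}"
      using that(2) cfg_arcs[of A' "S - {s}" "Suc t" n "insert (Suc t) (S - {s})"]
        cfg_arcs[of A' "insert (Suc t) (S - {s})" "Suc t" n "insert (Suc t) (S - {s})"]
      unfolding Y_def by blast
    have "a < b \<and> (a \<in> insert (Suc t) (S - {s}) \<or> Suc t < a) \<and> Suc t < b"
      using sub e ab by blast
    moreover have "s \<le> t" using that(1) S by auto
    ultimately show "Suc t < snd e \<and> fst e \<noteq> s" using ab by auto
  qed
  have d1: "(cfg S (Suc t) n \<union> cfg (insert (Suc t) S) (Suc t) n) \<inter>
     (\<Union>s\<in>S. insert (s, Suc t) ` Y s) = {}"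
    unfolding cfg_def by auto
  have d2: "cfg S (Suc t) n \<inter> cfg (insert (Suc t) S) (Suc t) n = {}"
    using cfg_disj[OF tS] by simp
  have d3: "cfg (S - {s}) (Suc t) n \<inter> cfg (insert (Suc t) (S - {s})) (Suc t) n = {}" for s
    using cfg_disj[of "Suc t" "S - {s}"] tS by simp
  have finY: "finite (Y s)" for s unfolding Y_def using finite_cfg by auto
  have dU: "\<forall>s\<in>S. \<forall>s'\<in>S. s \<noteq> s' \<longrightarrow> insert (s, Suc t) ` Y s \<inter> insert (s', Suc t) ` Y s' = {}"
  proof (intro ballI impI)
    fix s s' assume s: "s \<in> S" and s': "s' \<in> S" and ne: "s \<noteq> s'"
    show "insert (s, Suc t) ` Y s \<inter> insert (s', Suc t) ` Y s' = {}"
    proof (rule ccontr)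
      assume "insert (s, Suc t) ` Y s \<inter> insert (s', Suc t) ` Y s' \<noteq> {}"
      then obtain A1 A2 where A1: "A1 \<in> Y s" and A2: "A2 \<in> Y s'"
        and eq: "insert (s, Suc t) A1 = insert (s', Suc t) A2" by blast
      have "(s, Suc t) \<in> insert (s', Suc t) A2" using eq by blast
      then have "(s, Suc t) \<in> A2" using ne by simp
      then show False using Y_prop[OF s' A2] by auto
    qed
  qed
  have wins: "?w (insert (s, Suc t) A') = v * q ^ (card S - 1) * ?w A'" if s: "s \<in> S" and A': "A' \<in> Y s" for s A'
  proof -
    have fin: "finite A'" using A' unfolding Y_def by (auto intro: finite_cfg_elem)
    have nin: "(s, Suc t) \<notin> A'" using Y_prop[OF s A'] by auto
    have c1: "card (insert (s, Suc t) A') = Suc (card A')" using fin nin by simp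
    have "card {e\<in>A'. fst e < Suc t} = card (S - {s})"
    proof -
      have "{a\<in>S - {s}. a < Suc t} = S - {s}" "{a\<in>insert (Suc t) (S - {s}). a < Suc t} = S - {s}"
        using S by auto
      moreover have "A' \<in> cfg (S - {s}) (Suc t) n \<or> A' \<in> cfg (insert (Suc t) (S - {s})) (Suc t) n"
        using A' unfolding Y_def by blast
      ultimately show ?thesis using lefts_card by auto
    qed
    then have c2: "cn (insert (s, Suc t) A') = cn A' + (card S - 1)"
      using cn_insert[OF fin Y_prop[OF s A']] s finS by simp
    show ?thesis unfolding wt_def c1 c2 by (simp add: power_add algebra_simps)
  qed
  have "G v q S t (Suc n) = sum ?w (cfg S (Suc t) n \<union> cfg (insert (Suc t) S) (Suc t) n) +
      sum ?w (\<Union>s\<in>S. insert (s, Suc t) ` Y s)"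
    unfolding G_def cfg_split[OF S] Y_def[symmetric]
    by (rule sum.union_disjoint) (use finite_cfg finY finS d1 in auto)
  also have "sum ?w (cfg S (Suc t) n \<union> cfg (insert (Suc t) S) (Suc t) n) =
      G v q S (Suc t) n + G v q (insert (Suc t) S) (Suc t) n"
    unfolding G_def by (rule sum.union_disjoint) (use finite_cfg d2 in auto)
  also have "sum ?w (\<Union>s\<in>S. insert (s, Suc t) ` Y s) = (\<Sum>s\<in>S. sum ?w (insert (s, Suc t) ` Y s))"
    by (rule sum.UNION_disjoint) (use finS finY dU in auto)
  also have "\<dots> = (\<Sum>s\<in>S. v * q ^ (card S - 1) * (G v q (S - {s}) (Suc t) n + G v q (insert (Suc t) (S - {s})) (Suc t) n))"
  proof (rule sum.cong[OF refl])
    fix s assume s: "s \<in> S"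
    have inj: "inj_on (insert (s, Suc t)) (Y s)"
    proof (rule inj_onI)
      fix A1 A2 assume A1: "A1 \<in> Y s" and A2: "A2 \<in> Y s" and eq: "insert (s, Suc t) A1 = insert (s, Suc t) A2"
      have "(s, Suc t) \<notin> A1" "(s, Suc t) \<notin> A2" using Y_prop[OF s A1] Y_prop[OF s A2] by auto
      then show "A1 = A2" using eq by (metis Diff_insert_absorb)
    qed
    have "sum ?w (insert (s, Suc t) ` Y s) = sum (\<lambda>A'. v * q ^ (card S - 1) * ?w A') (Y s)"
      unfolding sum.reindex[OF inj] using wins[OF s] by (auto intro: sum.cong)
    also have "\<dots> = v * q ^ (card S - 1) * sum ?w (Y s)" by (simp add: sum_distrib_left)
    also have "sum ?w (Y s) = G v q (S - {s}) (Suc t) n + G v q (insert (Suc t) (S - {s})) (Suc t) n"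
      unfolding Y_def G_def by (rule sum.union_disjoint) (use finite_cfg d3 in auto)
    finally show "sum ?w (insert (s, Suc t) ` Y s) = v * q ^ (card S - 1) * (G v q (S - {s}) (Suc t) n + G v q (insert (Suc t) (S - {s})) (Suc t) n)" .
  qed
  finally show ?thesis .
qed

definition bb :: "'a::field \<Rightarrow> 'a \<Rightarrow> nat \<Rightarrow> 'a" where
  "bb v q k = 1 + of_nat k * q ^ (k - 1) * v"
definition cc :: "'a::field \<Rightarrow> 'a \<Rightarrow> nat \<Rightarrow> 'a" where
  "cc v q k = of_nat (k + 1) * q ^ k * v"


lemma G_W:
  assumes "S \<subseteq> {..t}"
  shows "G v q S t n = W (bb v q) (cc v q) n (card S)"
  using assms
proof (induction n arbitrary: S t)
  case 0
  have e: "A = {}" if "A \<in> cfg S t 0" for A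
  proof -
    have "A \<subseteq> {(a, b). t < b \<and> b \<le> t}" using that unfolding cfg_def by auto
    then show ?thesis by auto
  qed
  have "cfg S t 0 = (if S = {} then {{}} else {})"
  proof (cases "S = {}")
    case True
    then show ?thesis using e unfolding cfg_def by auto
  next
    case False
    then obtain a where a: "a \<in> S" by auto
    have "A \<notin> cfg S t 0" for A
    proof
      assume A: "A \<in> cfg S t 0"
      then obtain b where "(a, b) \<in> A" using a unfolding cfg_def by auto
      then show False using e[OF A] by auto
    qed
    then show ?thesis using False by auto
  qed
  moreover have "finite S" using "0.prems" by (meson finite_atMost finite_subset)
  ultimately show ?case
  proof (cases "S = {}")
    case True
    then show ?thesis using \<open>cfg S t 0 = _\<close> unfolding G_def wt_def cn_def by simp
  next
    case False
    then have "card S \<noteq> 0" using \<open>finite S\<close> by simp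
    then show ?thesis using \<open>cfg S t 0 = _\<close> False unfolding G_def by simp
  qed
next
  case (Suc n)
  have finS: "finite S" using Suc.prems finite_subset by blast
  have tS: "Suc t \<notin> S" using Suc.prems by auto
  have s1: "S \<subseteq> {..Suc t}" "insert (Suc t) S \<subseteq> {..Suc t}" using Suc.prems by auto
  have s2: "S - {s} \<subseteq> {..Suc t}" "insert (Suc t) (S - {s}) \<subseteq> {..Suc t}" for s using Suc.prems by auto
  have cS: "card (insert (Suc t) S) = Suc (card S)" using finS tS by simp
  have c3: "card (S - {s}) = card S - 1" "card (insert (Suc t) (S - {s})) = card S" if "s \<in> S" for s
  proof -
    have "card S > 0" using finS that card_gt_0_iff by blast
    then show "card (S - {s}) = card S - 1" "card (insert (Suc t) (S - {s})) = card S"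
      using finS tS that by auto
  qed
  let ?W = "W (bb v q) (cc v q) n"
  have "G v q S t (Suc n) = ?W (card S) + ?W (Suc (card S)) +
      (\<Sum>s\<in>S. v * q ^ (card S - 1) * (?W (card S - 1) + ?W (card S)))"
    unfolding G_rec[OF Suc.prems] Suc.IH[OF s1(1)] Suc.IH[OF s1(2)] Suc.IH[OF s2(1)] Suc.IH[OF s2(2)] cS
    using c3 by (intro arg_cong2[where f="(+)"] refl sum.cong) auto
  also have "\<dots> = ?W (card S) + ?W (Suc (card S)) +
      of_nat (card S) * (v * q ^ (card S - 1) * (?W (card S - 1) + ?W (card S)))"
    by simp
  also have "\<dots> = W (bb v q) (cc v q) (Suc n) (card S)"
    by (cases "card S") (simp_all add: bb_def cc_def algebra_simps)
  finally show ?case .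
qed



lemma same_block:
  assumes "partition_on A P" "B \<in> P" "C \<in> P" "x \<in> B" "x \<in> C"
  shows "B = C"
  using disjointD[OF partition_onD2[OF assms(1)] assms(2,3)] assms(4,5) by blast

lemma cr_ne_cn:
  assumes fin: "finite A" and lt: "\<forall>e\<in>A. fst e < snd e"
  shows "card {((i1, j1), (i2, j2)). (i1, j1) \<in> A \<and> (i2, j2) \<in> A \<and> i1 < i2 \<and> i2 < j1 \<and> j1 < j2}
       + card {((i1, j1), (i2, j2)). (i1, j1) \<in> A \<and> (i2, j2) \<in> A \<and> i1 < i2 \<and> i2 < j2 \<and> j2 < j1}
       = cn A"
proof -
  define X where "X = {((i1, j1), (i2, j2)). (i1, j1) \<in> A \<and> (i2, j2) \<in> A \<and> i1 < i2 \<and> i2 < j1 \<and> j1 < j2}"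
  define Y where "Y = {((i1, j1), (i2, j2)). (i1, j1) \<in> A \<and> (i2, j2) \<in> A \<and> i1 < i2 \<and> i2 < j2 \<and> j2 < j1}"
  define Z where "Z = {(e, e'). e \<in> A \<and> e' \<in> A \<and> snd e < snd e' \<and> fst e' < snd e \<and> fst e \<noteq> fst e'}"
  have finAA: "finite (A \<times> A)" using fin by simp
  have fX: "finite X" by (rule finite_subset[OF _ finAA]) (auto simp: X_def)
  have fY: "finite Y" by (rule finite_subset[OF _ finAA]) (auto simp: Y_def)
  have Zeq: "Z = X \<union> prod.swap ` Y"
  proof
    show "Z \<subseteq> X \<union> prod.swap ` Y"
    proof
      fix p assume p: "p \<in> Z"
      obtain a b a' b' where pe: "p = ((a, b), (a', b'))" by (cases p) auto
      have h: "(a, b) \<in> A" "(a', b') \<in> A" "b < b'" "a' < b" "a \<noteq> a'" using p pe Z_def by auto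
      show "p \<in> X \<union> prod.swap ` Y"
      proof (cases "a < a'")
        case True
        then have "p \<in> X" using h pe X_def by auto
        then show ?thesis by blast
      next
        case False
        then have "a' < a" using h by auto
        moreover have "a < b" using lt h(1) by auto
        ultimately have "((a', b'), (a, b)) \<in> Y" using h Y_def by auto
        then show ?thesis using pe by force
      qed
    qed
    show "X \<union> prod.swap ` Y \<subseteq> Z"
      using lt unfolding X_def Y_def Z_def by fastforce
  qed
  have disj: "X \<inter> prod.swap ` Y = {}" unfolding X_def Y_def by auto
  have "card (prod.swap ` Y) = card Y" by (rule card_image) (simp add: swap_inj_on)
  then have "cn A = card X + card Y"
    unfolding cn_def Z_def[symmetric] Zeq using card_Un_disjoint[OF fX _ disj] fY by simp
  then show ?thesis unfolding X_def Y_def by simp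
qed

lemma edges_sub:
  assumes "partition_on {1..n} P"
  shows "edges P \<subseteq> {(a, b). a < b \<and> 0 < a \<and> b \<le> n}"
proof
  fix e assume "e \<in> edges P"
  then obtain i j B where e: "e = (i, j)" "B \<in> P" "i \<in> B" "j \<in> B" "i < j"
    unfolding edges_def by auto
  have "B \<subseteq> {1..n}" using partition_onD1[OF assms] e(2) by auto
  then show "e \<in> {(a, b). a < b \<and> 0 < a \<and> b \<le> n}" using e by auto
qed

lemma edges_cfg:
  assumes P: "P \<in> set_partitions n"
  shows "edges P \<in> cfg {} 0 n"
proof -
  have part: "partition_on {1..n} P" using P set_partitions_def by auto
  have "inj_on fst (edges P)"
  proof (rule inj_onI)
    fix e e' assume e: "e \<in> edges P" and e': "e' \<in> edges P" and eq: "fst e = fst e'"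
    obtain i j B where h: "e = (i, j)" "B \<in> P" "i \<in> B" "j \<in> B" "i < j" "\<forall>k\<in>B. \<not> (i < k \<and> k < j)"
      using e unfolding edges_def by auto
    obtain i' j' B' where h': "e' = (i', j')" "B' \<in> P" "i' \<in> B'" "j' \<in> B'" "i' < j'" "\<forall>k\<in>B'. \<not> (i' < k \<and> k < j')"
      using e' unfolding edges_def by auto
    have "i = i'" using eq h h' by simp
    then have "B = B'" using same_block[OF part h(2) h'(2) h(3)] h'(3) by simp
    then have "\<not> j < j'" "\<not> j' < j" using h h' \<open>i = i'\<close> by auto
    then have "j = j'" by simp
    then show "e = e'" using h h' \<open>i = i'\<close> by simp
  qed
  moreover have "inj_on snd (edges P)"
  proof (rule inj_onI)
    fix e e' assume e: "e \<in> edges P" and e': "e' \<in> edges P" and eq: "snd e = snd e'"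
    obtain i j B where h: "e = (i, j)" "B \<in> P" "i \<in> B" "j \<in> B" "i < j" "\<forall>k\<in>B. \<not> (i < k \<and> k < j)"
      using e unfolding edges_def by auto
    obtain i' j' B' where h': "e' = (i', j')" "B' \<in> P" "i' \<in> B'" "j' \<in> B'" "i' < j'" "\<forall>k\<in>B'. \<not> (i' < k \<and> k < j')"
      using e' unfolding edges_def by auto
    have "j = j'" using eq h h' by simp
    then have "B = B'" using same_block[OF part h(2) h'(2) h(4)] h'(4) by simp
    then have "\<not> i < i'" "\<not> i' < i" using h h' \<open>j = j'\<close> by auto
    then have "i = i'" by simp
    then show "e = e'" using h h' \<open>j = j'\<close> by simp
  qed
  ultimately show ?thesis using edges_sub[OF part] unfolding cfg_def by auto
qed

lemma next_edge:
  assumes "finite B" "B \<in> P" "x \<in> B" "y \<in> B" "x < y"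
  shows "\<exists>j\<in>B. x < j \<and> j \<le> y \<and> (x, j) \<in> edges P"
proof -
  define K where "K = {k\<in>B. x < k}"
  have fK: "finite K" "K \<noteq> {}" using assms unfolding K_def by auto
  define j where "j = Min K"
  have jK: "j \<in> K" using fK j_def by simp
  have jmin: "\<forall>k\<in>K. j \<le> k" using fK j_def by simp
  have "j \<le> y" using jmin assms unfolding K_def by auto
  moreover have "(x, j) \<in> edges P"
  proof -
    have nb: "\<forall>k\<in>B. \<not> (x < k \<and> k < j)"
    proof (intro ballI notI)
      fix k assume "k \<in> B" "x < k \<and> k < j"
      then have "k \<in> K" "k < j" unfolding K_def by auto
      then show False using jmin by fastforce
    qed
    have "j \<in> B" "x < j" using jK unfolding K_def by auto
    then show ?thesis unfolding edges_def using nb assms(2,3) by blast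
  qed
  ultimately show ?thesis using jK unfolding K_def by auto
qed

lemma chain:
  assumes part: "partition_on {1..n} P" and B: "B \<in> P" "x \<in> B" "y \<in> B" "x < y"
  shows "(x, y) \<in> (edges P)\<^sup>+"
  using B
proof (induction "y - x" arbitrary: x rule: less_induct)
  case less
  have fB: "finite B" using partition_onD1[OF part] less.prems(1)
    by (metis Sup_upper finite_atLeastAtMost finite_subset)
  obtain j where j: "j \<in> B" "x < j" "j \<le> y" "(x, j) \<in> edges P"
    using next_edge[OF fB less.prems] by blast
  show ?case
  proof (cases "j = y")
    case True
    then show ?thesis using j by auto
  next
    case False
    then have "(j, y) \<in> (edges P)\<^sup>+" using less.hyps[of j] j less.prems by auto
    then show ?thesis using j(4) by (meson trancl_into_trancl2)
  qed
qed

lemma trancl_block: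
  assumes part: "partition_on A P" and "(x, y) \<in> (edges P)\<^sup>+"
  shows "\<forall>B\<in>P. x \<in> B \<longrightarrow> y \<in> B"
  using assms(2)
proof (induction rule: trancl_induct)
  case (base y)
  then obtain C where "C \<in> P" "x \<in> C" "y \<in> C" unfolding edges_def by auto
  then show ?case using same_block[OF part] by blast
next
  case (step y z)
  then obtain C where "C \<in> P" "y \<in> C" "z \<in> C" unfolding edges_def by auto
  then show ?case using same_block[OF part] step.IH by blast
qed

lemma trancl_in_block:
  assumes "(x, y) \<in> (edges P)\<^sup>+"
  shows "\<exists>C\<in>P. x \<in> C"
proof -
  obtain z where "(x, z) \<in> edges P" using tranclD[OF assms] by blast
  then show ?thesis unfolding edges_def by auto
qed

lemma block_char:
  assumes part: "partition_on {1..n} P" and B: "B \<in> P" "x \<in> B"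
  shows "B = {y. x = y \<or> (x, y) \<in> (edges P)\<^sup>+ \<or> (y, x) \<in> (edges P)\<^sup>+}"
proof
  show "B \<subseteq> {y. x = y \<or> (x, y) \<in> (edges P)\<^sup>+ \<or> (y, x) \<in> (edges P)\<^sup>+}"
  proof
    fix y assume y: "y \<in> B"
    consider "x = y" | "x < y" | "y < x" by linarith
    then show "y \<in> {y. x = y \<or> (x, y) \<in> (edges P)\<^sup>+ \<or> (y, x) \<in> (edges P)\<^sup>+}"
      by cases (use chain[OF part B(1)] B y in auto)
  qed
  show "{y. x = y \<or> (x, y) \<in> (edges P)\<^sup>+ \<or> (y, x) \<in> (edges P)\<^sup>+} \<subseteq> B"
  proof
    fix y assume "y \<in> {y. x = y \<or> (x, y) \<in> (edges P)\<^sup>+ \<or> (y, x) \<in> (edges P)\<^sup>+}"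
    then consider "x = y" | "(x, y) \<in> (edges P)\<^sup>+" | "(y, x) \<in> (edges P)\<^sup>+" by auto
    then show "y \<in> B"
    proof cases
      case 1 then show ?thesis using B by simp
    next
      case 2 then show ?thesis using trancl_block[OF part] B by blast
    next
      case 3
      obtain C where C: "C \<in> P" "y \<in> C" using trancl_in_block[OF 3] by blast
      have "x \<in> C" using trancl_block[OF part 3] C by blast
      then have "C = B" using same_block[OF part C(1) B(1)] B by simp
      then show ?thesis using C by simp
    qed
  qed
qed

lemma edges_inj_aux:
  assumes P: "partition_on {1..n} P" and Q: "partition_on {1..n} Q" and eq: "edges P = edges Q"
  shows "P \<subseteq> Q"
proof
  fix B assume B: "B \<in> P"
  have "B \<noteq> {}" using partition_onD3[OF P] B by auto
  then obtain x where x: "x \<in> B" by blast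
  have "x \<in> {1..n}" using partition_onD1[OF P] B x by auto
  moreover have U: "\<Union>Q = {1..n}" using partition_onD1[OF Q] by simp
  ultimately have "x \<in> \<Union>Q" by (simp only: U)
  then obtain C where C: "C \<in> Q" "x \<in> C" by blast
  have "B = C" using block_char[OF P B x] block_char[OF Q C] eq by simp
  then show "B \<in> Q" using C by simp
qed

lemma edges_inj: "inj_on edges (set_partitions n)"
proof (rule inj_onI)
  fix P Q assume "P \<in> set_partitions n" "Q \<in> set_partitions n" and eq: "edges P = edges Q"
  then have P: "partition_on {1..n} P" and Q: "partition_on {1..n} Q" unfolding set_partitions_def by auto
  show "P = Q" using edges_inj_aux[OF P Q eq] edges_inj_aux[OF Q P eq[symmetric]] by (rule subset_antisym)
qed



definition bedges :: "nat set \<Rightarrow> (nat \<times> nat) set" where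
  "bedges B = {(i, j). i \<in> B \<and> j \<in> B \<and> i < j \<and> (\<forall>k\<in>B. \<not> (i < k \<and> k < j))}"

lemma edges_bedges: "edges P = (\<Union>B\<in>P. bedges B)"
  unfolding edges_def bedges_def by blast

lemma edges_insert: "edges (insert B P) = edges P \<union> bedges B"
  unfolding edges_bedges by blast

lemma bedges_single: "bedges {m} = {}"
  unfolding bedges_def by auto

lemma bedges_insert_max:
  assumes i: "i \<in> B" "\<forall>k\<in>B. k \<le> i" "i < m"
  shows "bedges (insert m B) = insert (i, m) (bedges B)"
proof
  show "bedges (insert m B) \<subseteq> insert (i, m) (bedges B)"
  proof
    fix e assume e: "e \<in> bedges (insert m B)"
    then obtain a b where ab: "e = (a, b)" "a \<in> insert m B" "b \<in> insert m B" "a < b"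
      and nb: "\<forall>k\<in>insert m B. \<not> (a < k \<and> k < b)"
      unfolding bedges_def by blast
    have am: "a \<noteq> m"
    proof
      assume "a = m"
      then have "b \<in> B" using ab by auto
      then show False using ab i \<open>a = m\<close> by fastforce
    qed
    then have aB: "a \<in> B" using ab by auto
    show "e \<in> insert (i, m) (bedges B)"
    proof (cases "b = m")
      case True
      have "\<not> a < i" using nb i True by blast
      then have "a = i" using aB i by fastforce
      then show ?thesis using ab True by simp
    next
      case False
      then have "b \<in> B" using ab by auto
      then have "(a, b) \<in> bedges B" unfolding bedges_def using aB ab nb by blast
      then show ?thesis using ab by simp
    qed
  qed
  show "insert (i, m) (bedges B) \<subseteq> bedges (insert m B)"
  proof
    fix e assume e: "e \<in> insert (i, m) (bedges B)"
    show "e \<in> bedges (insert m B)"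
    proof (cases "e = (i, m)")
      case True
      have "\<forall>k\<in>insert m B. \<not> (i < k \<and> k < m)" using i by fastforce
      then show ?thesis unfolding bedges_def using True i by blast
    next
      case False
      then have "e \<in> bedges B" using e by simp
      then obtain a b where ab: "e = (a, b)" "a \<in> B" "b \<in> B" "a < b"
        and nb: "\<forall>k\<in>B. \<not> (a < k \<and> k < b)" unfolding bedges_def by blast
      have "b < m" using ab i by fastforce
      then have "\<forall>k\<in>insert m B. \<not> (a < k \<and> k < b)" using nb by auto
      then show ?thesis unfolding bedges_def using ab by blast
    qed
  qed
qed

lemma edges_surj: "A \<in> cfg {} 0 n \<Longrightarrow> \<exists>P\<in>set_partitions n. edges P = A"
proof (induction n arbitrary: A)
  case 0
  have "A \<subseteq> {(a, b). 0 < b \<and> b \<le> 0}" using "0.prems" unfolding cfg_def by auto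
  then have "A = {}" by auto
  moreover have "{} \<in> set_partitions 0" unfolding set_partitions_def by (simp add: partition_on_empty)
  moreover have "edges {} = {}" unfolding edges_def by simp
  ultimately show ?case by blast
next
  case (Suc n)
  have Asub: "A \<subseteq> {(a, b). a < b \<and> 0 < a \<and> b \<le> Suc n}"
    and injf: "inj_on fst A" and injs: "inj_on snd A"
    using Suc.prems unfolding cfg_def by auto
  define A' where "A' = {e\<in>A. snd e \<le> n}"
  have "A' \<subseteq> {(a, b). a < b \<and> (a \<in> {} \<or> 0 < a) \<and> 0 < b \<and> b \<le> 0 + n}"
    using Asub unfolding A'_def by auto
  moreover have "inj_on fst A'" "inj_on snd A'" using injf injs unfolding A'_def by (auto intro: inj_on_subset)
  ultimately have "A' \<in> cfg {} 0 n" unfolding cfg_def by blast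
  then obtain P' where P': "P' \<in> set_partitions n" and eP': "edges P' = A'" using Suc.IH by blast
  have part': "partition_on {1..n} P'" using P' unfolding set_partitions_def by simp
  have UP': "\<Union>P' = {1..n}" using partition_onD1[OF part'] by simp
  show ?case
  proof (cases "\<exists>i. (i, Suc n) \<in> A")
    case False
    have AA: "A' = A"
    proof
      show "A \<subseteq> A'"
      proof
        fix e assume e: "e \<in> A"
        obtain a b where ab: "e = (a, b)" by fastforce
        have "b \<le> Suc n" "b \<noteq> Suc n" using Asub e ab False by auto
        then show "e \<in> A'" unfolding A'_def using e ab by simp
      qed
    qed (auto simp: A'_def)
    define P where "P = insert {Suc n} P'"
    have dj: "disjnt {Suc n} (\<Union>P')" unfolding UP' by simp
    have eq: "{1..Suc n} - {Suc n} = {1..n}" by auto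
    have "partition_on {1..Suc n} P"
      unfolding P_def partition_on_insert[OF dj] eq using part' by simp
    moreover have "edges P = A" unfolding P_def edges_insert bedges_single eP' AA by simp
    ultimately show ?thesis unfolding set_partitions_def by blast
  next
    case True
    then obtain i where iA: "(i, Suc n) \<in> A" by blast
    have i1: "i \<in> {1..n}" using Asub iA by auto
    then have "i \<in> \<Union>P'" unfolding UP' .
    then obtain B0 where B0: "B0 \<in> P'" "i \<in> B0" by blast
    have B0sub: "B0 \<subseteq> {1..n}" using B0 UP' by auto
    have fB0: "finite B0" using B0sub by (rule finite_subset) simp
    have imax: "\<forall>k\<in>B0. k \<le> i"
    proof (rule ccontr)
      assume "\<not> (\<forall>k\<in>B0. k \<le> i)"
      then obtain k where k: "k \<in> B0" "i < k" by (auto simp: not_le)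
      obtain j where j: "j \<in> B0" "i < j" "j \<le> k" "(i, j) \<in> edges P'"
        using next_edge[OF fB0 B0(1) B0(2) k] by blast
      have "(i, j) \<in> A" using j(4) eP' unfolding A'_def by auto
      then have "(i, j) = (i, Suc n)" using inj_onD[OF injf, of "(i, j)" "(i, Suc n)"] iA by simp
      moreover have "k \<le> n" using k B0sub by auto
      ultimately show False using j by simp
    qed
    have Aeq: "A = insert (i, Suc n) A'"
    proof
      show "A \<subseteq> insert (i, Suc n) A'"
      proof
        fix e assume e: "e \<in> A"
        show "e \<in> insert (i, Suc n) A'"
        proof (cases "snd e \<le> n")
          case True then show ?thesis using e unfolding A'_def by simp
        next
          case False
          then have "snd e = Suc n" using Asub e by auto
          then have "e = (i, Suc n)" using inj_onD[OF injs, of e "(i, Suc n)"] iA e by simp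
          then show ?thesis by simp
        qed
      qed
    qed (use iA in \<open>auto simp: A'_def\<close>)
    define P where "P = insert (insert (Suc n) B0) (P' - {B0})"
    have P'eq: "P' = insert B0 (P' - {B0})" using B0 by auto
    have dj0: "disjnt B0 (\<Union>(P' - {B0}))"
    proof -
      have "B0 \<inter> C = {}" if "C \<in> P' - {B0}" for C
        using disjointD[OF partition_onD2[OF part'] B0(1)] that by auto
      then show ?thesis unfolding disjnt_def by auto
    qed
    have part0: "partition_on ({1..n} - B0) (P' - {B0})"
      using part' partition_on_insert[OF dj0, of "{1..n}"] P'eq by simp
    have dj1: "disjnt (insert (Suc n) B0) (\<Union>(P' - {B0}))"
    proof -
      have "\<Union>(P' - {B0}) \<subseteq> \<Union>P'" by blast
      then have "Suc n \<notin> \<Union>(P' - {B0})" unfolding UP' by auto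
      then show ?thesis using dj0 unfolding disjnt_def by auto
    qed
    have "{1..Suc n} - insert (Suc n) B0 = {1..n} - B0" by auto
    then have "partition_on {1..Suc n} P"
      unfolding P_def partition_on_insert[OF dj1] using part0 B0sub by auto
    moreover have "edges P = A"
    proof -
      have "edges P = edges (P' - {B0}) \<union> insert (i, Suc n) (bedges B0)"
      proof -
        have "i < Suc n" using i1 by simp
        then show ?thesis unfolding P_def edges_insert bedges_insert_max[OF B0(2) imax \<open>i < Suc n\<close>] by simp
      qed
      also have "\<dots> = insert (i, Suc n) (edges P')"
      proof -
        have "edges (insert B0 (P' - {B0})) = edges (P' - {B0}) \<union> bedges B0" by (rule edges_insert)
        then have "edges P' = edges (P' - {B0}) \<union> bedges B0" unfolding P'eq[symmetric] .
        then show ?thesis by simp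
      qed
      finally show ?thesis using Aeq eP' by simp
    qed
    ultimately show ?thesis unfolding set_partitions_def by blast
  qed
qed



lemma E_G: "E n v q = G v q {} 0 n"
proof -
  have fin: "finite (edges P)" and lt: "\<forall>e\<in>edges P. fst e < snd e" if "P \<in> set_partitions n" for P
    using edges_cfg[OF that] finite_cfg_elem unfolding edges_def by auto
  have crne: "cr P + ne P = cn (edges P)" if "P \<in> set_partitions n" for P
    unfolding cr_def ne_def by (rule cr_ne_cn[OF fin[OF that] lt[OF that]])
  have "E n v q = (\<Sum>P\<in>set_partitions n. wt v q (edges P))"
    unfolding E_def wt_def ed_def
    by (rule sum.cong[OF refl]) (simp add: crne)
  also have "\<dots> = (\<Sum>A\<in>edges ` set_partitions n. wt v q A)"
    by (simp add: sum.reindex[OF edges_inj])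
  also have "edges ` set_partitions n = cfg {} 0 n"
    using edges_cfg edges_surj by blast
  finally show ?thesis unfolding G_def .
qed

theorem corollary3p6:
  fixes v q :: "'a::field"
  shows "(\<lambda>m. jcf (\<lambda>k. 1 + of_nat k * q ^ (k - 1) * v)
                  (\<lambda>k. of_nat (k + 1) * q ^ k * v) m 0)
           \<longlonglongrightarrow> Abs_fps (\<lambda>n. E n v q)"
proof -
  have b: "(\<lambda>k. 1 + of_nat k * q ^ (k - 1) * v) = bb v q" by (simp add: fun_eq_iff bb_def)
  have c: "(\<lambda>k. of_nat (k + 1) * q ^ k * v) = cc v q" by (simp add: fun_eq_iff cc_def)
  have "Abs_fps (\<lambda>n. E n v q) = Abs_fps (\<lambda>n. W (bb v q) (cc v q) n 0)"
  proof (intro arg_cong[where f=Abs_fps] ext)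
    fix n
    show "E n v q = W (bb v q) (cc v q) n 0" using E_G[of n v q] G_W[of "{}" 0 v q n] by simp
  qed
  then show ?thesis unfolding b c using jcf_tendsto[of "bb v q" "cc v q"] by simp
qed


end
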